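(* Let $q=3^m$ with $m\ge1$ and $f(x)=x^{q+2}$ on $\mathbb{F}_{q^2}$. If $q\ge 9$ then $\nu_2>0$, and if $q\ge 27$ then $\nu_5>0$.
   Context: $\beta_f(a,b)$ is the number of $(x,y)\in\mathbb{F}_{q^2}^2$ with $f(x)-f(y)=b$ and $f(x+a)-f(y+a)=b$. For the power function $f$, $\nu_i=\#\{b\in\mathbb{F}_{q^2}^*:\ \beta_f(1,b)=i\}$. *)

theory Defs
  imports Main
begin

definition beta :: "('a::{field,finite} \<Rightarrow> 'a) \<Rightarrow> 'a \<Rightarrow> 'a \<Rightarrow> nat" where
  "beta f a b = card {(x, y). f x - f y = b \<and> f (x + a) - f (y + a) = b}"

definition nu :: "('a::{field,finite} \<Rightarrow> 'a) \<Rightarrow> nat \<Rightarrow> nat" where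
  "nu f i = card {b. b \<noteq> 0 \<and> beta f 1 b = i}"

end

theory Submission
  imports Defs "HOL-Number_Theory.Residues" "HOL-Computational_Algebra.Polynomial" "HOL-Computational_Algebra.Primes"
begin

lemma frac1: fixes n m A B :: "'a::field"
  assumes "n \<noteq> 0" "m \<noteq> 0" "n^3*m^2 = A^2*m^2 - B^2*n^2" shows "n = (A/n)^2 - (B/m)^2"
proof -
  have "(A/n)^2 - (B/m)^2 = (A^2*m^2 - B^2*n^2) / (n^2*m^2)"
    using assms(1,2) by (simp add: power_divide diff_frac_eq)
  also have "\<dots> = n^3*m^2 / (n^2*m^2)" using assms(3) by simp
  also have "\<dots> = n" using assms(1,2) by (simp add: power2_eq_square power3_eq_cube)
  finally show ?thesis by simp
qed
lemma frac2: fixes n m A B :: "'a::field"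
  assumes "n \<noteq> 0" "m \<noteq> 0" "n = (A/n)^2 - (B/m)^2" shows "n^3*m^2 = A^2*m^2 - B^2*n^2"
proof -
  have "(A/n)^2 - (B/m)^2 = (A^2*m^2 - B^2*n^2) / (n^2*m^2)"
    using assms(1,2) by (simp add: power_divide diff_frac_eq)
  hence "n = (A^2*m^2 - B^2*n^2) / (n^2*m^2)" using assms(3) by simp
  hence "n * (n^2*m^2) = A^2*m^2 - B^2*n^2" using assms(1,2) by (simp add: field_simps)
  thus ?thesis by (simp add: power2_eq_square power3_eq_cube mult_ac)
qed
lemma lin_a: fixes a b c :: "'a::ab_group_add" shows "a - b + c = 0 \<Longrightarrow> a = b - c"
  by (simp add: algebra_simps)

definition Qp :: "'a::field \<Rightarrow> 'a \<Rightarrow> 'a \<Rightarrow> 'a" where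
  "Qp A B n = n^3*(n+1)^2 - A^2*(n+1)^2 + B^2*n^2"

locale conj3 =
  fixes c :: "'a::field \<Rightarrow> 'a"
  assumes c_add: "c (x + y) = c x + c y"
    and c_mult: "c (x * y) = c x * c y"
    and c_c: "c (c x) = x"
    and c_one: "c 1 = 1"
    and three: "(3::'a) = 0"
begin

lemma c_zero[simp]: "c 0 = 0"
proof -
  have "c 0 + 0 = c 0 + c 0" using c_add[of 0 0] by simp
  thus ?thesis by (metis add_left_cancel)
qed

lemma c_minus: "c (- x) = - c x"
proof -
  have h: "c x + c (- x) = 0" using c_add[of x "-x"] by simp
  have "c (- x) = - c x + (c x + c (- x))" by simp
  thus ?thesis using h by simp
qed

lemma c_diff: "c (x - y) = c x - c y"
  using c_add[of x "-y"] c_minus[of y] by simp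

lemma c_inj: "c x = c y \<Longrightarrow> x = y"
  by (metis c_c)

lemma c_eq0[simp]: "c x = 0 \<longleftrightarrow> x = 0"
  by (metis c_c c_zero)

lemma c_inverse: "c (inverse x) = inverse (c x)"
proof (cases "x = 0")
  case True thus ?thesis by simp
next
  case False
  have "c x * c (inverse x) = 1" using c_mult[of x "inverse x"] False by (simp add: c_one)
  thus ?thesis using False by (simp add: field_simps)
qed

lemma c_divide: "c (x / y) = c x / c y"
  by (simp add: divide_inverse c_mult c_inverse)

lemma c_power: "c (x ^ n) = c x ^ n"
  by (induction n) (simp_all add: c_one c_mult)

lemma c_of_nat: "c (of_nat n) = of_nat n"
  by (induction n) (simp_all add: c_one c_add)

lemma c_numeral[simp]: "c (numeral k) = numeral k"
  using c_of_nat[of "numeral k"] by simp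

lemmas c_simps = c_add c_mult c_c c_one c_minus c_diff c_divide c_power c_inverse

lemma two_eq: "(2::'a) = - 1"
  using three by (simp add: eq_neg_iff_add_eq_0)

lemma two_ne0: "(2::'a) \<noteq> 0"
  by (simp add: two_eq)

lemma four_eq: "(4::'a) = 1"
proof -
  have "(4::'a) = 3 + 1" by simp
  thus ?thesis using three by simp
qed

lemma threex: "3 * (x::'a) = 0" using three by simp

definition F :: "'a \<Rightarrow> 'a" where "F u = c u * u^2 + c u - u"
definition E :: "'a \<Rightarrow> 'a" where "E u = u^2 - u * c u"

lemma c_F: "c (F u) = F (c u)"
  unfolding F_def by (simp add: c_simps)

lemma F_minus: "F (- u) = - F u"
  unfolding F_def by (simp add: c_simps)

lemma F_fix: "c u = u \<Longrightarrow> c (F u) = F u"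
  by (simp add: c_F)

lemma half: "(x::'a) + x = - x"
proof -
  have "x + x = 2 * x" by simp
  also have "\<dots> = - x" by (simp add: two_eq)
  finally show ?thesis .
qed

lemma E_lemma:
  assumes e: "E u = E v" and fb: "F u - F v = b" and cb: "c b \<noteq> b"
  shows "v = - u"
proof -
  have cu: "c u \<noteq> u"
  proof
    assume cu: "c u = u"
    have "E v = 0" using e cu by (simp add: E_def power2_eq_square)
    hence "v * (v - c v) = 0" by (simp add: E_def power2_eq_square algebra_simps)
    hence cv: "c v = v" by auto
    have "c b = b" using fb F_fix[OF cu] F_fix[OF cv] by (auto simp: c_diff)
    with cb show False by simp
  qed
  have cv: "c v \<noteq> v"
  proof
    assume cv: "c v = v"
    have "E u = 0" using e cv by (simp add: E_def power2_eq_square)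
    hence "u * (u - c u) = 0" by (simp add: E_def power2_eq_square algebra_simps)
    hence "c u = u" by auto
    with cu show False by simp
  qed
  have ce: "c (E u) = c u ^ 2 - c u * u" for u
  proof -
    have "c (E u) = c (u^2) - c (u * c u)" unfolding E_def by (rule c_diff)
    thus ?thesis by (simp add: c_power c_mult c_c)
  qed
  have s1: "E u + c (E u) = (u - c u)^2" for u
    unfolding ce unfolding E_def by (simp add: power2_eq_square algebra_simps)
  have s2: "E u - c (E u) = (u - c u) * (u + c u)" for u
    unfolding ce unfolding E_def by (simp add: power2_eq_square algebra_simps)
  have w2: "(v - c v)^2 = (u - c u)^2" using s1[of u] s1[of v] e by simp
  have wt: "(v - c v) * (v + c v) = (u - c u) * (u + c u)" using s2[of u] s2[of v] e by simp
  from w2 have "(v - c v - (u - c u)) * (v - c v + (u - c u)) = 0"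
    by (simp add: power2_eq_square algebra_simps)
  hence "v - c v - (u - c u) = 0 \<or> v - c v + (u - c u) = 0" by simp
  hence "v - c v = u - c u \<or> v - c v = - (u - c u)"
    by (metis eq_neg_iff_add_eq_0 eq_iff_diff_eq_0)
  thus ?thesis
  proof
    assume h: "v - c v = u - c u"
    have nz: "u - c u \<noteq> 0" using cu by simp
    have "(u - c u) * ((v + c v) - (u + c u)) = 0" using wt h by (simp add: algebra_simps)
    hence h2: "v + c v = u + c u" using nz by simp
    have "v + v = u + u" using h h2 by Groebner_Basis.algebra
    hence "- v = - u" by (simp only: half)
    hence "v = u" by simp
    hence "b = 0" using fb by simp
    thus ?thesis using cb by simp
  next
    assume h: "v - c v = - (u - c u)"
    have nz: "u - c u \<noteq> 0" using cu by simp
    have "(u - c u) * ((v + c v) + (u + c u)) = 0" using wt h by (simp add: algebra_simps)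
    hence "v + c v + (u + c u) = 0" using nz by simp
    hence h2: "v + c v = - (u + c u)" by (simp only: eq_neg_iff_add_eq_0)
    have "v + v = (- u) + (- u)" using h h2 by Groebner_Basis.algebra
    hence "- v = - (- u)" by (simp only: half)
    thus "v = - u" by (metis minus_minus)
  qed
qed

lemma c_x1: "c (x + 1) = c x + 1" by (simp add: c_add c_one)

lemma partB:
  assumes cb: "c b \<noteq> b"
  shows "{(x, y). c x * x^2 - c y * y^2 = b \<and> c (x+1) * (x+1)^2 - c (y+1) * (y+1)^2 = b}
         = (\<lambda>u. (1 + u, 1 - u)) ` {u. F u = - b}"
proof (intro Set.set_eqI iffI)
  fix p assume "p \<in> {(x, y). c x * x^2 - c y * y^2 = b \<and> c (x+1) * (x+1)^2 - c (y+1) * (y+1)^2 = b}"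
  then obtain x y where p: "p = (x, y)" and e1: "c x * x^2 - c y * y^2 = b"
      and e2: "c (x+1) * (x+1)^2 - c (y+1) * (y+1)^2 = b" by auto
  define u where "u = x - 1"
  define v where "v = y - 1"
  have xu: "x = 1 + u" and yv: "y = 1 + v" by (simp_all add: u_def v_def)
  have cx: "c x = 1 + c u" "c y = 1 + c v" "c (x+1) = 2 + c u" "c (y+1) = 2 + c v"
    by (simp_all add: xu yv c_add c_one)
  have x1: "x + 1 = 2 + u" "y + 1 = 2 + v" by (simp_all add: xu yv)
  have G1: "(1 + c u) * (1+u)^2 - (1 + c v) * (1+v)^2 = b" using e1 cx xu yv by simp
  have G2: "(2 + c u) * (2+u)^2 - (2 + c v) * (2+v)^2 = b" using e2 cx x1 by simp
  have gd: "(1 + c w) * (1+w)^2 - (2 + c w) * (2+w)^2 = -1 - E w - 3*(2 + 2*w + c w + w * c w)" for w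
    unfolding E_def by Groebner_Basis.algebra
  have gs: "(1 + c w) * (1+w)^2 + (2 + c w) * (2+w)^2 = - F w + 3*(3 + 3*w + w^2 + 2*c w + 2*w*c w + c w * w^2)" for w
    unfolding F_def by Groebner_Basis.algebra
  have lin1: "a1 - b1 = b \<Longrightarrow> a2 - b2 = b \<Longrightarrow> a1 - a2 = b1 - b2" for a1 a2 b1 b2 :: 'a
    by (simp add: algebra_simps)
  have lin2: "a1 - b1 = b \<Longrightarrow> a2 - b2 = b \<Longrightarrow> a1 + a2 - (b1 + b2) = b + b" for a1 a2 b1 b2 :: 'a
    by (simp add: algebra_simps)
  have "(1 + c u) * (1+u)^2 - (2 + c u) * (2+u)^2 = (1 + c v) * (1+v)^2 - (2 + c v) * (2+v)^2"
    using lin1[OF G1 G2] .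
  hence eE: "E u = E v" using gd[of u] gd[of v] three by simp
  have "(1 + c u) * (1+u)^2 + (2 + c u) * (2+u)^2 - ((1 + c v) * (1+v)^2 + (2 + c v) * (2+v)^2) = b + b"
    using lin2[OF G1 G2] .
  hence "- F u + F v = b + b" using gs[of u] gs[of v] three by simp
  hence fF: "F u - F v = b" using half[of b] by (simp add: algebra_simps)
  have vu: "v = - u" by (rule E_lemma[OF eE fF cb])
  have "F u - F (- u) = b" using fF vu by simp
  hence "F u + F u = b" by (simp add: F_minus)
  hence "- F u = b" using half[of "F u"] by simp
  hence "F u = - b" by (metis minus_minus)
  moreover have "p = (1 + u, 1 - u)" using p xu yv vu by simp
  ultimately show "p \<in> (\<lambda>u. (1 + u, 1 - u)) ` {u. F u = - b}" by auto
next
  fix p assume "p \<in> (\<lambda>u. (1 + u, 1 - u)) ` {u. F u = - b}"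
  then obtain u where p: "p = (1 + u, 1 - u)" and fu: "F u = - b" by auto
  have h1: "(1 + c u) * (1+u)^2 - (1 - c u) * (1-u)^2 = - F u + 3*(u + c u + c u * u^2)"
    unfolding F_def by Groebner_Basis.algebra
  have h2: "(2 + c u) * (2+u)^2 - (2 - c u) * (2-u)^2 = - F u + 3*(5*u + 3*c u + c u * u^2)"
    unfolding F_def by Groebner_Basis.algebra
  have a1: "c (1 + u) = 1 + c u" "c (1 - u) = 1 - c u" by (simp_all add: c_add c_diff c_one)
  have a2: "c (1 + u + 1) = 2 + c u" "c (1 - u + 1) = 2 - c u" by (simp_all add: c_add c_diff c_one)
  have a3: "1 + u + 1 = 2 + u" "1 - u + 1 = 2 - u" by simp_all
  show "p \<in> {(x, y). c x * x^2 - c y * y^2 = b \<and> c (x+1) * (x+1)^2 - c (y+1) * (y+1)^2 = b}"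
    unfolding p using h1 h2 a1 a2 a3 fu three by simp
qed

lemma partB_card:
  assumes cb: "c b \<noteq> b"
  shows "card {(x, y). c x * x^2 - c y * y^2 = b \<and> c (x+1) * (x+1)^2 - c (y+1) * (y+1)^2 = b}
         = card {u. F u = - b}"
  unfolding partB[OF cb] by (rule card_image) (auto simp: inj_on_def)

lemma partC_back:
  assumes ct: "c t \<noteq> t" and cn: "c n = n" and n0: "n \<noteq> 0" and nm1: "n \<noteq> -1"
    and q: "Qp (t + c t) (t - c t) n = 0"
  defines "u \<equiv> -((t + c t)/n + (t - c t)/(n+1))"
  shows "u * c u = n" and "F u = t"
proof -
  define A where "A = t + c t"
  define B where "B = t - c t"
  have ueq: "u = -(A/n + B/(n+1))" unfolding u_def A_def B_def ..
  have n1: "n + 1 \<noteq> 0" using nm1 by (simp add: eq_neg_iff_add_eq_0)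
  have cA: "c A = A" unfolding A_def by (simp add: c_add c_c add.commute)
  have cB: "c B = - B" unfolding B_def by (simp add: c_diff c_c)
  have cn1: "c (n + 1) = n + 1" using cn by (simp add: c_add c_one)
  have "c u = - (c (A/n) + c (B/(n+1)))" unfolding ueq by (simp only: c_minus c_add)
  also have "\<dots> = - (A/n + (-B)/(n+1))" by (simp only: c_divide cA cB cn cn1)
  finally have cu: "c u = -(A/n - B/(n+1))" by simp
  have "n^3*(n+1)^2 = A^2*(n+1)^2 - B^2*n^2" using q unfolding Qp_def A_def B_def by (rule lin_a)
  hence nAB: "n = (A/n)^2 - (B/(n+1))^2" using n0 n1 by (rule frac1[rotated 2])
  define a where "a = A/n"
  define b where "b = B/(n+1)"
  have na: "n * a = A" unfolding a_def using n0 by simp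
  have mb: "(n + 1) * b = B" unfolding b_def using n1 by simp
  have ua: "u = -(a + b)" unfolding ueq a_def b_def ..
  have cua: "c u = -(a - b)" unfolding cu a_def b_def ..
  have "u * c u = a^2 - b^2" by (simp only: cua) (simp add: ua power2_eq_square algebra_simps)
  thus nu: "u * c u = n" using nAB unfolding a_def b_def by simp
  have "F u = (u * c u) * u + c u - u" unfolding F_def by (simp add: power2_eq_square algebra_simps)
  also have "\<dots> = n * u + c u - u" using nu by simp
  also have "\<dots> = - (n * a) - ((n + 1) * b) + 3 * b" by (simp only: cua) (simp add: ua algebra_simps)
  also have "\<dots> = - (A + B)" using na mb three by simp
  also have "\<dots> = t" unfolding A_def B_def using half[of t] by (simp add: algebra_simps)
  finally show "F u = t" .
qed

lemma partC:
  assumes ct: "c t \<noteq> t"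
  defines "A \<equiv> t + c t" and "B \<equiv> t - c t"
  shows "{u. F u = t} = (\<lambda>n. -(A/n + B/(n+1))) ` {n. c n = n \<and> n \<noteq> 0 \<and> n \<noteq> -1 \<and> Qp A B n = 0}"
proof (intro Set.set_eqI iffI)
  fix u assume "u \<in> {u. F u = t}"
  hence fu: "F u = t" by simp
  define n where "n = u * c u"
  have cn: "c n = n" unfolding n_def by (simp add: c_mult c_c mult.commute)
  have tt: "t = n*u + c u - u" using fu unfolding F_def n_def by (simp add: power2_eq_square algebra_simps)
  have ctt: "c t = n * c u + u - c u" using fu c_F[of u] unfolding F_def n_def
    by (simp add: c_c power2_eq_square algebra_simps)
  have "t + c t = (n*u + c u - u) + (n * c u + u - c u)" by (rule arg_cong2[where f="(+)", OF tt ctt])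
  hence Aeq: "A = n * (u + c u)" unfolding A_def by (simp add: algebra_simps)
  have "t - c t = (n*u + c u - u) - (n * c u + u - c u)" by (rule arg_cong2[where f="(-)", OF tt ctt])
  hence "B = (n - 2) * (u - c u)" unfolding B_def by (simp add: algebra_simps)
  hence Beq: "B = (n + 1) * (u - c u)" using two_eq by simp
  have B0: "B \<noteq> 0" using ct unfolding B_def by simp
  have n0: "n \<noteq> 0"
  proof
    assume "n = 0"
    hence "u = 0" unfolding n_def by auto
    hence "t = 0" using fu unfolding F_def by simp
    thus False using ct by simp
  qed
  have n1: "n + 1 \<noteq> 0" using B0 Beq by auto
  have nm1: "n \<noteq> -1" using n1 by (simp add: eq_neg_iff_add_eq_0)
  have s1: "u + c u = A / n" using Aeq n0 by simp
  have s2: "u - c u = B / (n + 1)" using Beq n1 by simp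
  have "u + u = A/n + B/(n+1)" using s1 s2 by Groebner_Basis.algebra
  hence ueq: "u = -(A/n + B/(n+1))" using half[of u] by (metis minus_minus)
  have "4 * n = (u + c u)^2 - (u - c u)^2" unfolding n_def by Groebner_Basis.algebra
  hence "n = (A/n)^2 - (B/(n+1))^2" using s1 s2 four_eq by simp
  hence "n^3*(n+1)^2 = A^2*(n+1)^2 - B^2*n^2" using n0 n1 by (rule frac2[rotated 2])
  hence "Qp A B n = 0" unfolding Qp_def by simp
  thus "u \<in> (\<lambda>n. -(A/n + B/(n+1))) ` {n. c n = n \<and> n \<noteq> 0 \<and> n \<noteq> -1 \<and> Qp A B n = 0}"
    using cn n0 nm1 ueq by blast
next
  fix u assume "u \<in> (\<lambda>n. -(A/n + B/(n+1))) ` {n. c n = n \<and> n \<noteq> 0 \<and> n \<noteq> -1 \<and> Qp A B n = 0}"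
  then obtain n where ueq: "u = -(A/n + B/(n+1))" and cn: "c n = n" and n0: "n \<noteq> 0"
    and nm1: "n \<noteq> -1" and q: "Qp A B n = 0" by blast
  have fu: "F (-((t + c t)/n + (t - c t)/(n+1))) = t"
    by (rule partC_back(2)[OF ct cn n0 nm1 q[unfolded A_def B_def]])
  have "u = -((t + c t)/n + (t - c t)/(n+1))" using ueq unfolding A_def B_def .
  thus "u \<in> {u. F u = t}" using fu by simp
qed

lemma partC_card:
  assumes ct: "c t \<noteq> t"
  shows "card {u. F u = t} = card {n. c n = n \<and> n \<noteq> 0 \<and> n \<noteq> -1 \<and> Qp (t + c t) (t - c t) n = 0}"
proof -
  let ?g = "\<lambda>n. -((t + c t)/n + (t - c t)/(n+1))"
  let ?S = "{n. c n = n \<and> n \<noteq> 0 \<and> n \<noteq> -1 \<and> Qp (t + c t) (t - c t) n = 0}"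
  have "inj_on ?g ?S"
  proof (rule inj_onI)
    fix n1 n2 assume h1: "n1 \<in> ?S" and h2: "n2 \<in> ?S" and e: "?g n1 = ?g n2"
    have k1: "?g n1 * c (?g n1) = n1" using partC_back(1)[OF ct] h1 by blast
    have k2: "?g n2 * c (?g n2) = n2" using partC_back(1)[OF ct] h2 by blast
    show "n1 = n2" using k1 k2 e by metis
  qed
  thus ?thesis using partC[OF ct] by (simp add: card_image)
qed

end

lemma ID1: fixes n th w :: "'a::idom"
  shows "(1 - (1 + th^2)*w^2)*(th^2*(1 - (1 + th^2)*w^2)^4*n^3*(n+1)^2 - ((1 + th^2)*(w+1)^2 - 1)^2*((1 + th^2)*(w-1)^2 - 1)^2*(n+1)^2 + (1 + th^2)^5*(w^3-w)^2*n^2)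
   = ((1 - (1 + th^2)*w^2)*n - ((1 + th^2)*(w-1)^2 - 1))*((1 - (1 + th^2)*w^2)*n - ((1 + th^2)*(w+1)^2 - 1))*(th^2*((1 - (1 + th^2)*w^2)*n + 1)^3 - th^2*(1 + th^2)*((1 - (1 + th^2)*w^2)*n + 1)^2 + (w^3-w)^2*(1 + th^2)^3) + 3 * (n^4*th^12*w^8 + 4*n^4*th^10*w^8 - (4*n^4*th^10*w^6) + 6*n^4*th^8*w^8 - (12*n^4*th^8*w^6) + 6*n^4*th^8*w^4 + 4*n^4*th^6*w^8 - (12*n^4*th^6*w^6) + 12*n^4*th^6*w^4 - (4*n^4*th^6*w^2) + n^4*th^4*w^8 - (4*n^4*th^4*w^6) + 6*n^4*th^4*w^4 - (4*n^4*th^4*w^2) + n^4*th^4 + n^3*th^12*w^6 - (2*n^3*th^10*w^8) + n^3*th^10*w^6 - (3*n^3*th^10*w^4) - (8*n^3*th^8*w^8) + 3*n^3*th^8*w^6 + 3*n^3*th^8*w^2 - (12*n^3*th^6*w^8) + 13*n^3*th^6*w^6 + 3*n^3*th^6*w^4 - (3*n^3*th^6*w^2) - (n^3*th^6) - (8*n^3*th^4*w^8) + 16*n^3*th^4*w^6 - (6*n^3*th^4*w^4) - (4*n^3*th^4*w^2) + 2*n^3*th^4 - (2*n^3*th^2*w^8) + 6*n^3*th^2*w^6 - (6*n^3*th^2*w^4) + 2*n^3*th^2*w^2 - (2*n^2*th^10*w^8) + 2*n^2*th^10*w^6 - (4*n^2*th^10*w^4) - (10*n^2*th^8*w^8) +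 18*n^2*th^8*w^6 - (12*n^2*th^8*w^4) + 6*n^2*th^8*w^2 - (20*n^2*th^6*w^8) + 49*n^2*th^6*w^6 - (26*n^2*th^6*w^4) + 7*n^2*th^6*w^2 - (2*n^2*th^6) - (20*n^2*th^4*w^8) + 59*n^2*th^4*w^6 - (37*n^2*th^4*w^4) + 5*n^2*th^4*w^2 + n^2*th^4 - (10*n^2*th^2*w^8) + 33*n^2*th^2*w^6 - (24*n^2*th^2*w^4) + 4*n^2*th^2*w^2 - (2*n^2*w^8) + 7*n^2*w^6 - (5*n^2*w^4) - (2*n*th^10*w^8) + 4*n*th^10*w^6 - (2*n*th^10*w^4) - (12*n*th^8*w^8) + 25*n*th^8*w^6 - (12*n*th^8*w^4) + 3*n*th^8*w^2 - (28*n*th^6*w^8) + 65*n*th^6*w^6 - (31*n*th^6*w^4) + 7*n*th^6*w^2 - (n*th^6) - (32*n*th^4*w^8) + 85*n*th^4*w^6 - (44*n*th^4*w^4) + 6*n*th^4*w^2 - (18*n*th^2*w^8) + 55*n*th^2*w^6 - (33*n*th^2*w^4) + 2*n*th^2*w^2 - (4*n*w^8) + 14*n*w^6 - (10*n*w^4) - (th^8*w^8) + 2*th^8*w^6 - (th^8*w^4) - (4*th^6*w^8) + 11*th^6*w^6 - (4*th^6*w^4) + th^6*w^2 - (6*th^4*w^8) + 21*th^4*w^6 - (9*th^4*w^4) + th^4*w^2 - (4*th^2*w^8) + 17*th^2*w^6 - (10*th^2*w^4) - (w^8) + 5*w^6 - (4*w^4))"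
  by Groebner_Basis.algebra

lemma IDr1: fixes th w :: "'a::idom"
  shows "(w^3-w)^3 - (w^3-w)*th^2*((w-1)^2)^2 + (w^3-w)*th^2*((w-1)^2)^3 = (w^3-w)*(w-1)^2*w*(w+1)*((1 + th^2)*(w-1)^2 - 1) + 3 * (- (th^2*w^8) + 4*th^2*w^7 - (5*th^2*w^6) + 5*th^2*w^4 - (4*th^2*w^3) + th^2*w^2 + w^8 - (w^7) - (2*w^6) + 2*w^5 + w^4 - (w^3))"
  by Groebner_Basis.algebra

lemma IDr2: fixes th w :: "'a::idom"
  shows "(w^3-w)^3 - (w^3-w)*th^2*((w+1)^2)^2 + (w^3-w)*th^2*((w+1)^2)^3 = (w^3-w)*(w+1)^2*w*(w-1)*((1 + th^2)*(w+1)^2 - 1) + 3 * (th^2*w^8 + 4*th^2*w^7 + 5*th^2*w^6 - (5*th^2*w^4) - (4*th^2*w^3) - (th^2*w^2) - (w^8) - (w^7) + 2*w^6 + 2*w^5 - (w^4) - (w^3))"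
  by Groebner_Basis.algebra

locale fam = conj3 c for c :: "'a::field \<Rightarrow> 'a" +
  fixes z w :: 'a
  assumes hz: "z * c z = -1" and hzc: "c z \<noteq> z" and hw: "c w = w" and hw3: "w^3 \<noteq> w"
begin

lemma neg_self: fixes y :: 'a assumes "y = - y" shows "y = 0"
proof -
  have "y + y = 0" using assms by (metis add.right_inverse)
  hence "- y = 0" using half[of y] by simp
  thus ?thesis by simp
qed

definition "thv = -(z + c z)"
definition "omv = z - c z"
definition "Tv = 1 + thv^2"
definition "Dv = 1 - Tv*w^2"
definition "Ppv = Tv*(w+1)^2 - 1"
definition "Pmv = Tv*(w-1)^2 - 1"
definition "phv = w^3 - w"
definition "Av = Ppv*Pmv/(thv*Dv^2)"
definition "Bv = Tv^2*omv*phv/(thv*Dv^2)"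
definition "tv = -(Av + Bv)"
definition "Kv n = thv^2*(Dv*n+1)^3 - thv^2*Tv*(Dv*n+1)^2 + phv^2*Tv^3"

lemma c_th: "c thv = thv" unfolding thv_def by (simp only: c_minus c_add c_c) (simp add: add.commute)
lemma c_om: "c omv = - omv" unfolding omv_def by (simp add: c_diff c_c)
lemma om_ne: "omv \<noteq> 0" unfolding omv_def using hzc by simp
lemma om_sq: "omv^2 = Tv"
proof -
  have "omv^2 = thv^2 - 4*(z * c z)" unfolding omv_def thv_def by Groebner_Basis.algebra
  also have "\<dots> = thv^2 + 4" using hz by simp
  also have "\<dots> = thv^2 + 1" by (simp only: four_eq)
  finally show ?thesis unfolding Tv_def by (simp add: add.commute)
qed

lemma nonsq: assumes "c x = x" shows "Tv \<noteq> x^2"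
proof
  assume "Tv = x^2"
  hence "omv^2 = x^2" using om_sq by simp
  hence "(omv - x) * (omv + x) = 0" by (simp add: power2_eq_square algebra_simps)
  hence "omv = x \<or> omv = - x" by (auto simp: eq_neg_iff_add_eq_0)
  hence "c omv = omv" using assms by (auto simp: c_minus)
  hence "omv = - omv" using c_om by simp
  hence "omv = 0" using neg_self by blast
  thus False using om_ne by simp
qed

lemma c_T: "c Tv = Tv" unfolding Tv_def by (simp add: c_add c_one c_power c_th)
lemma c_D: "c Dv = Dv" unfolding Dv_def by (simp add: c_diff c_one c_mult c_power c_T hw)
lemma c_Pp: "c Ppv = Ppv" unfolding Ppv_def by (simp add: c_diff c_add c_one c_mult c_power c_T hw)
lemma c_Pm: "c Pmv = Pmv" unfolding Pmv_def by (simp add: c_diff c_one c_mult c_power c_T hw)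
lemma c_ph: "c phv = phv" unfolding phv_def by (simp add: c_diff c_power hw)

lemma w0: "w \<noteq> 0" using hw3 by auto
lemma w1: "w - 1 \<noteq> 0" using hw3 by auto
lemma w2: "w + 1 \<noteq> 0"
proof
  assume "w + 1 = 0" hence "w = -1" by (simp add: eq_neg_iff_add_eq_0)
  thus False using hw3 by simp
qed
lemma ph_ne: "phv \<noteq> 0" unfolding phv_def using hw3 by simp
lemma ph_fac: "phv = w*(w-1)*(w+1)" unfolding phv_def by (simp add: algebra_simps power3_eq_cube)

lemma th_ne: "thv \<noteq> 0"
proof
  assume "thv = 0" hence "Tv = 1^2" unfolding Tv_def by simp
  thus False using nonsq[of 1] c_one by simp
qed
lemma T_ne: "Tv \<noteq> 0" using nonsq[of 0] by simp

lemma sq_helper: assumes "Tv * y^2 = 1" "c y = y" shows False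
proof -
  have "y \<noteq> 0" using assms(1) by auto
  hence "Tv = (1/y)^2" using assms(1) by (simp add: field_simps)
  moreover have "c (1/y) = 1/y" using assms(2) by (simp add: c_divide c_one)
  ultimately show False using nonsq by blast
qed

lemma D_ne: "Dv \<noteq> 0"
proof
  assume "Dv = 0" hence "Tv * w^2 = 1" unfolding Dv_def by simp
  thus False using sq_helper hw by blast
qed
lemma Pp_ne: "Ppv \<noteq> 0"
proof
  assume "Ppv = 0" hence "Tv * (w+1)^2 = 1" unfolding Ppv_def by simp
  moreover have "c (w + 1) = w + 1" using hw by (simp add: c_add c_one)
  ultimately show False using sq_helper by blast
qed
lemma Pm_ne: "Pmv \<noteq> 0"
proof
  assume "Pmv = 0" hence "Tv * (w-1)^2 = 1" unfolding Pmv_def by simp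
  moreover have "c (w - 1) = w - 1" using hw by (simp add: c_diff c_one)
  ultimately show False using sq_helper by blast
qed

lemma A_ne: "Av \<noteq> 0" unfolding Av_def using Pp_ne Pm_ne th_ne D_ne by simp
lemma B_ne: "Bv \<noteq> 0" unfolding Bv_def using T_ne om_ne ph_ne th_ne D_ne by simp
lemma c_A: "c Av = Av" unfolding Av_def by (simp add: c_divide c_mult c_power c_Pp c_Pm c_th c_D)
lemma c_B: "c Bv = - Bv" unfolding Bv_def by (simp add: c_divide c_mult c_power c_T c_om c_ph c_th c_D)
lemma c_tv: "c tv = -(Av - Bv)" unfolding tv_def by (simp only: c_minus c_add c_A c_B) simp
lemma ct_ne: "c tv \<noteq> tv"
proof
  assume "c tv = tv"
  hence "-(Av - Bv) = -(Av + Bv)" using c_tv unfolding tv_def by simp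
  hence "Bv = - Bv" by simp
  hence "Bv = 0" using neg_self by blast
  thus False using B_ne by simp
qed
lemma tA: "tv + c tv = Av"
proof -
  have "tv + c tv = - (Av + Av)" by (simp only: c_tv) (simp add: tv_def algebra_simps)
  thus ?thesis using half[of Av] by simp
qed
lemma tB: "tv - c tv = Bv"
proof -
  have "tv - c tv = - (Bv + Bv)" by (simp only: c_tv) (simp add: tv_def algebra_simps)
  thus ?thesis using half[of Bv] by simp
qed

end

lemma Ky_gen: fixes p T th X :: "'a::field" assumes "X \<noteq> 0" "th \<noteq> 0"
  shows "(p*T/(th*X))^3 - p*T/(th*X) + p/th = p*(th^2*X^3 - th^2*T*X^2 + p^2*T^3)/(th^3*X^3)"
  using assms by (simp add: field_simps power2_eq_square power3_eq_cube)

lemma drop3: fixes x y h :: "'a::comm_ring_1" assumes "(3::'a) = 0" "x = y + 3*h" shows "x = y"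
  using assms by simp

context conj3 begin

lemma cube_p1: "(y + 1)^3 - (y + 1) = y^3 - (y::'a)"
proof -
  have "(y + 1)^3 - (y + 1) = y^3 - y + 3*(y^2 + y)" by Groebner_Basis.algebra
  thus ?thesis using three by simp
qed

lemma cube_m1: "(y - 1)^3 - (y - 1) = y^3 - (y::'a)"
proof -
  have "(y - 1)^3 - (y - 1) = y^3 - y + 3*(y - y^2)" by Groebner_Basis.algebra
  thus ?thesis using three by simp
qed

lemma cube_diff: "(a - b)^3 = a^3 - (b::'a)^3"
proof -
  have "(a - b)^3 = a^3 - b^3 + 3*(a*b^2 - a^2*b)" by Groebner_Basis.algebra
  thus ?thesis using three by simp
qed

lemma cube_self: assumes "x^3 = (x::'a)" shows "x = 0 \<or> x = 1 \<or> x = -1"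
proof -
  have "x * (x - 1) * (x + 1) = 0" using assms by (simp add: algebra_simps power3_eq_cube)
  thus ?thesis by (auto simp: eq_neg_iff_add_eq_0)
qed

lemma one_ne_m1: "(1::'a) \<noteq> -1"
proof
  assume h: "(1::'a) = -1"
  have "(2::'a) = 1" using two_eq h by simp
  hence "(1::'a) + 1 = 1 + 0" by simp
  hence "(1::'a) = 0" by (simp only: add_left_cancel)
  thus False by simp
qed

end

context fam begin

lemma Qp_clear: "thv^2*Dv^4*Qp Av Bv n = thv^2*Dv^4*n^3*(n+1)^2 - Ppv^2*Pmv^2*(n+1)^2 + Tv^5*phv^2*n^2"
proof -
  have k0: "thv*Dv^2 \<noteq> 0" using th_ne D_ne by simp
  have a0: "(thv*Dv^2) * Av = Ppv*Pmv" unfolding Av_def using k0 by simp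
  have b0: "(thv*Dv^2) * Bv = Tv^2*omv*phv" unfolding Bv_def using k0 by simp
  have a1: "(thv*Dv^2)^2 * Av^2 = Ppv^2*Pmv^2"
    using arg_cong[OF a0, of "\<lambda>x. x^2"] by (simp add: power_mult_distrib)
  have b1: "(thv*Dv^2)^2 * Bv^2 = Tv^5*phv^2"
  proof -
    have "(thv*Dv^2)^2 * Bv^2 = (Tv^2*omv*phv)^2"
      using arg_cong[OF b0, of "\<lambda>x. x^2"] by (simp add: power_mult_distrib)
    also have "\<dots> = Tv^4 * omv^2 * phv^2" by (simp add: power_mult_distrib power_mult[symmetric])
    also have "\<dots> = Tv^4 * Tv * phv^2" by (simp only: om_sq)
    also have "\<dots> = Tv^5 * phv^2" by Groebner_Basis.algebra
    finally show ?thesis .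
  qed
  have "thv^2*Dv^4*Qp Av Bv n = (thv*Dv^2)^2*n^3*(n+1)^2 - ((thv*Dv^2)^2 * Av^2)*(n+1)^2
        + ((thv*Dv^2)^2 * Bv^2)*n^2"
    unfolding Qp_def by Groebner_Basis.algebra
  also have "\<dots> = thv^2*Dv^4*n^3*(n+1)^2 - Ppv^2*Pmv^2*(n+1)^2 + Tv^5*phv^2*n^2"
    unfolding a1 b1 by Groebner_Basis.algebra
  finally show ?thesis .
qed

lemma E1: "Dv*(thv^2*Dv^4*n^3*(n+1)^2 - Ppv^2*Pmv^2*(n+1)^2 + Tv^5*phv^2*n^2) = (Dv*n - Pmv)*(Dv*n - Ppv)*Kv n"
  unfolding Kv_def Dv_def Ppv_def Pmv_def phv_def Tv_def
  by (rule drop3[OF three ID1[where n=n and th=thv and w=w]])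

lemma Qfac: "thv^2*Dv^5*Qp Av Bv n = (Dv*n - Pmv)*(Dv*n - Ppv)*Kv n"
proof -
  have "thv^2*Dv^5*Qp Av Bv n = Dv*(thv^2*Dv^4*Qp Av Bv n)" by Groebner_Basis.algebra
  also have "\<dots> = (Dv*n - Pmv)*(Dv*n - Ppv)*Kv n" unfolding Qp_clear by (rule E1)
  finally show ?thesis .
qed

lemma Qroot: "Qp Av Bv n = 0 \<longleftrightarrow> (n = Pmv/Dv \<or> n = Ppv/Dv \<or> Kv n = 0)"
proof -
  have k: "thv^2*Dv^5 \<noteq> 0" using th_ne D_ne by simp
  have "Qp Av Bv n = 0 \<longleftrightarrow> thv^2*Dv^5*Qp Av Bv n = 0" using k by simp
  also have "\<dots> \<longleftrightarrow> (Dv*n - Pmv)*(Dv*n - Ppv)*Kv n = 0" unfolding Qfac ..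
  also have "\<dots> \<longleftrightarrow> (Dv*n - Pmv = 0 \<or> Dv*n - Ppv = 0 \<or> Kv n = 0)" by simp
  also have "(Dv*n - Pmv = 0) \<longleftrightarrow> n = Pmv/Dv" using D_ne by (auto simp: field_simps)
  also have "(Dv*n - Ppv = 0) \<longleftrightarrow> n = Ppv/Dv" using D_ne by (auto simp: field_simps)
  finally show ?thesis .
qed

lemma Qp0: "Qp Av Bv 0 \<noteq> 0" unfolding Qp_def using A_ne by simp
lemma Qpm1: "Qp Av Bv (-1) \<noteq> 0" unfolding Qp_def using B_ne by simp

lemma KX0: "Dv*n + 1 = 0 \<Longrightarrow> Kv n \<noteq> 0"
  unfolding Kv_def using ph_ne T_ne by simp

lemma Ky: assumes "Dv*n + 1 \<noteq> 0"
  shows "(phv*Tv/(thv*(Dv*n+1)))^3 - phv*Tv/(thv*(Dv*n+1)) + phv/thv = phv*Kv n/(thv^3*(Dv*n+1)^3)"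
  unfolding Kv_def by (rule Ky_gen[OF assms th_ne])

definition "Rt = {n. c n = n \<and> n \<noteq> 0 \<and> n \<noteq> -1 \<and> Qp Av Bv n = 0}"

lemma c_n_fix: assumes "c n = n" shows "c (phv*Tv/(thv*(Dv*n+1))) = phv*Tv/(thv*(Dv*n+1))"
  using assms by (simp add: c_divide c_mult c_add c_one c_ph c_T c_th c_D)

lemma r_in: assumes "r = Pmv/Dv \<or> r = Ppv/Dv" shows "r \<in> Rt"
proof -
  have cr: "c r = r" using assms by (auto simp: c_divide c_Pm c_Pp c_D)
  have q: "Qp Av Bv r = 0" using assms Qroot by blast
  have "r \<noteq> 0" using q Qp0 by auto
  moreover have "r \<noteq> -1" using q Qpm1 by auto
  ultimately show ?thesis unfolding Rt_def using cr q by simp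
qed

lemma r_ne: "Pmv/Dv \<noteq> Ppv/Dv"
proof
  assume "Pmv/Dv = Ppv/Dv"
  hence "Pmv = Ppv" using D_ne by simp
  moreover have "Ppv - Pmv = 4 * (Tv * w)" unfolding Ppv_def Pmv_def by Groebner_Basis.algebra
  ultimately have "Tv * w = 0" using four_eq by simp
  thus False using T_ne w0 by simp
qed

lemma beta2: assumes noroot: "\<forall>y. c y = y \<longrightarrow> y^3 - y + phv/thv \<noteq> 0"
  shows "card Rt = 2"
proof -
  have "Rt = {Pmv/Dv, Ppv/Dv}"
  proof (intro Set.set_eqI iffI)
    fix n assume "n \<in> Rt"
    hence cn: "c n = n" and q: "Qp Av Bv n = 0" unfolding Rt_def by auto
    show "n \<in> {Pmv/Dv, Ppv/Dv}"
    proof (cases "Kv n = 0")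
      case True
      have X0: "Dv*n + 1 \<noteq> 0" using KX0 True by blast
      have "(phv*Tv/(thv*(Dv*n+1)))^3 - phv*Tv/(thv*(Dv*n+1)) + phv/thv = 0"
        unfolding Ky[OF X0] True by simp
      moreover have "c (phv*Tv/(thv*(Dv*n+1))) = phv*Tv/(thv*(Dv*n+1))" by (rule c_n_fix[OF cn])
      ultimately show ?thesis using noroot by blast
    next
      case False thus ?thesis using q Qroot by auto
    qed
  next
    fix n assume "n \<in> {Pmv/Dv, Ppv/Dv}"
    thus "n \<in> Rt" using r_in by blast
  qed
  thus ?thesis using r_ne by simp
qed

end

lemma mul_clear: fixes p th d :: "'a::field" assumes "d \<noteq> 0" "th \<noteq> 0"
  shows "(p/(th*d))^3 - p/(th*d) + p/th = (p^3 - p*th^2*d^2 + p*th^2*d^3)/(th^3*d^3)"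
  using assms by (simp add: field_simps power2_eq_square power3_eq_cube)

context fam begin

definition "nn y = (phv*Tv/(thv*y) - 1)/Dv"

lemma Rf0: "y^3 - y + phv/thv = 0 \<Longrightarrow> y \<noteq> 0"
  using ph_ne th_ne by auto

lemma nn_X: assumes "y \<noteq> 0" shows "Dv * nn y + 1 = phv*Tv/(thv*y)"
  unfolding nn_def using D_ne by simp

lemma nn_in: assumes r: "y^3 - y + phv/thv = 0" and cy: "c y = y" shows "nn y \<in> Rt"
proof -
  have y0: "y \<noteq> 0" using Rf0[OF r] .
  define X where "X = Dv * nn y + 1"
  have X: "X = phv*Tv/(thv*y)" unfolding X_def using nn_X[OF y0] .
  have X0: "X \<noteq> 0" unfolding X using ph_ne T_ne th_ne y0 by simp
  have yX: "phv*Tv/(thv*X) = y" unfolding X using ph_ne T_ne th_ne y0 by (simp add: field_simps)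
  have "phv*Kv (nn y)/(thv^3*X^3) = 0" using Ky[of "nn y"] X0 r unfolding X_def[symmetric] yX by simp
  hence K0: "Kv (nn y) = 0" using ph_ne th_ne X0 by simp
  hence q: "Qp Av Bv (nn y) = 0" using Qroot by blast
  have cn: "c (nn y) = nn y" unfolding nn_def using cy
    by (simp add: c_divide c_mult c_diff c_one c_ph c_T c_th c_D)
  have "nn y \<noteq> 0" using q Qp0 by auto
  moreover have "nn y \<noteq> -1" using q Qpm1 by auto
  ultimately show ?thesis unfolding Rt_def using cn q by simp
qed

lemma nn_inj: assumes "y1 \<noteq> 0" "y2 \<noteq> 0" "nn y1 = nn y2" shows "y1 = y2"
proof -
  have "phv*Tv/(thv*y1) = phv*Tv/(thv*y2)" using assms(3) D_ne unfolding nn_def by simp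
  thus ?thesis using ph_ne T_ne th_ne assms(1,2) by (simp add: field_simps)
qed

lemma nn_ne_r1: assumes r: "y^3 - y + phv/thv = 0" shows "nn y \<noteq> Pmv/Dv"
proof
  assume h: "nn y = Pmv/Dv"
  have y0: "y \<noteq> 0" using Rf0[OF r] .
  have "Dv * nn y + 1 = Pmv + 1" using h D_ne by simp
  hence "phv*Tv/(thv*y) = Tv*(w-1)^2" using nn_X[OF y0] unfolding Pmv_def by simp
  hence yv: "y = phv/(thv*(w-1)^2)" using T_ne th_ne y0 w1 by (simp add: field_simps)
  have d0: "(w-1)^2 \<noteq> 0" using w1 by simp
  have "(phv^3 - phv*thv^2*((w-1)^2)^2 + phv*thv^2*((w-1)^2)^3)/(thv^3*((w-1)^2)^3) = 0"
    using r unfolding yv mul_clear[OF d0 th_ne] .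
  hence "phv^3 - phv*thv^2*((w-1)^2)^2 + phv*thv^2*((w-1)^2)^3 = 0" using th_ne d0 by simp
  hence "phv*(w-1)^2*w*(w+1)*Pmv = 0"
    using drop3[OF three IDr1[where th=thv and w=w]] unfolding phv_def Pmv_def Tv_def by simp
  thus False using ph_ne w1 w0 w2 Pm_ne by simp
qed

lemma nn_ne_r2: assumes r: "y^3 - y + phv/thv = 0" shows "nn y \<noteq> Ppv/Dv"
proof
  assume h: "nn y = Ppv/Dv"
  have y0: "y \<noteq> 0" using Rf0[OF r] .
  have "Dv * nn y + 1 = Ppv + 1" using h D_ne by simp
  hence "phv*Tv/(thv*y) = Tv*(w+1)^2" using nn_X[OF y0] unfolding Ppv_def by simp
  hence yv: "y = phv/(thv*(w+1)^2)" using T_ne th_ne y0 w2 by (simp add: field_simps)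
  have d0: "(w+1)^2 \<noteq> 0" using w2 by simp
  have "(phv^3 - phv*thv^2*((w+1)^2)^2 + phv*thv^2*((w+1)^2)^3)/(thv^3*((w+1)^2)^3) = 0"
    using r unfolding yv mul_clear[OF d0 th_ne] .
  hence "phv^3 - phv*thv^2*((w+1)^2)^2 + phv*thv^2*((w+1)^2)^3 = 0" using th_ne d0 by simp
  hence "phv*(w+1)^2*w*(w-1)*Ppv = 0"
    using drop3[OF three IDr2[where th=thv and w=w]] unfolding phv_def Ppv_def Tv_def by simp
  thus False using ph_ne w1 w0 w2 Pp_ne by simp
qed

lemma beta5: assumes cy0: "c y0 = y0" and ry0: "y0^3 - y0 + phv/thv = 0"
  shows "card Rt = 5"
proof -
  have r1: "(y0+1)^3 - (y0+1) + phv/thv = 0" using ry0 by (simp only: cube_p1)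
  have r2: "(y0-1)^3 - (y0-1) + phv/thv = 0" using ry0 by (simp only: cube_m1)
  have c1: "c (y0+1) = y0+1" using cy0 by (simp add: c_add c_one)
  have c2: "c (y0-1) = y0-1" using cy0 by (simp add: c_diff c_one)
  have nz: "y0 \<noteq> 0" "y0 + 1 \<noteq> 0" "y0 - 1 \<noteq> 0" using Rf0 ry0 r1 r2 by blast+
  have d1: "y0 \<noteq> y0 + 1" "y0 \<noteq> y0 - 1" by simp_all
  have d2: "y0 + 1 \<noteq> y0 - 1"
  proof
    assume "y0 + 1 = y0 - 1" hence "(1::'a) = -1" by (simp add: algebra_simps)
    thus False using one_ne_m1 by simp
  qed
  have Req: "Rt = {Pmv/Dv, Ppv/Dv, nn y0, nn (y0+1), nn (y0-1)}"
  proof (intro Set.set_eqI iffI)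
    fix n assume nR: "n \<in> Rt"
    hence cn: "c n = n" and q: "Qp Av Bv n = 0" unfolding Rt_def by auto
    show "n \<in> {Pmv/Dv, Ppv/Dv, nn y0, nn (y0+1), nn (y0-1)}"
    proof (cases "Kv n = 0")
      case False thus ?thesis using q Qroot by auto
    next
      case True
      have X0: "Dv*n + 1 \<noteq> 0" using KX0 True by blast
      define y where "y = phv*Tv/(thv*(Dv*n+1))"
      have ry: "y^3 - y + phv/thv = 0" unfolding y_def Ky[OF X0] True by simp
      have yne: "y \<noteq> 0" using Rf0[OF ry] .
      have a: "y^3 = y - phv/thv" using ry by (rule lin_a)
      have b: "y0^3 = y0 - phv/thv" using ry0 by (rule lin_a)
      have "(y - y0)^3 = y^3 - y0^3" by (rule cube_diff)
      also have "\<dots> = (y - phv/thv) - (y0 - phv/thv)" by (simp only: a b)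
      also have "\<dots> = y - y0" by simp
      finally have "(y - y0)^3 = y - y0" .
      hence "y - y0 = 0 \<or> y - y0 = 1 \<or> y - y0 = -1" by (rule cube_self)
      hence yy: "y = y0 \<or> y = y0 + 1 \<or> y = y0 - 1" by (auto simp: algebra_simps)
      have "phv*Tv/(thv*y) = Dv*n + 1" unfolding y_def using ph_ne T_ne th_ne X0 by (simp add: field_simps)
      hence "nn y = n" unfolding nn_def using D_ne by (simp add: field_simps)
      thus ?thesis using yy by auto
    qed
  next
    fix n assume "n \<in> {Pmv/Dv, Ppv/Dv, nn y0, nn (y0+1), nn (y0-1)}"
    thus "n \<in> Rt" using r_in nn_in[OF ry0 cy0] nn_in[OF r1 c1] nn_in[OF r2 c2] by blast
  qed
  have i1: "nn y0 \<noteq> nn (y0+1)" using nn_inj nz d1 by blast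
  have i2: "nn y0 \<noteq> nn (y0-1)" using nn_inj nz d1 by blast
  have i3: "nn (y0+1) \<noteq> nn (y0-1)" using nn_inj nz d2 by blast
  have e1: "nn y0 \<noteq> Pmv/Dv" "nn (y0+1) \<noteq> Pmv/Dv" "nn (y0-1) \<noteq> Pmv/Dv"
    using nn_ne_r1 ry0 r1 r2 by blast+
  have e2: "nn y0 \<noteq> Ppv/Dv" "nn (y0+1) \<noteq> Ppv/Dv" "nn (y0-1) \<noteq> Ppv/Dv"
    using nn_ne_r2 ry0 r1 r2 by blast+
  show ?thesis unfolding Req using i1 i2 i3 e1 e2 r_ne
    by (simp add: card_insert_if)
qed

end

lemma card_fibres_le:
  assumes fin: "finite A" and fb: "\<And>y. y \<in> f ` A \<Longrightarrow> card {x \<in> A. f x = y} \<le> k"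
  shows "card A \<le> k * card (f ` A)"
proof -
  have A: "A = (\<Union>y\<in>f ` A. {x \<in> A. f x = y})" by auto
  have "card A \<le> (\<Sum>y\<in>f`A. card {x\<in>A. f x = y})"
    by (subst A) (rule card_UN_le, use fin in simp)
  also have "\<dots> \<le> (\<Sum>y\<in>f`A. k)" by (rule sum_mono) (use fb in auto)
  also have "\<dots> = k * card (f ` A)" by simp
  finally show ?thesis .
qed

lemma card_pow_eq_le: fixes a :: "'a::field" assumes "n \<ge> 1"
  shows "card {x::'a. x^n = a} \<le> n"
proof -
  define p where "p = monom (1::'a) n + [:-a:]"
  have dp: "degree p = n" unfolding p_def using assms by (subst degree_add_eq_left) (simp_all add: degree_monom_eq)
  have p0: "p \<noteq> 0" using dp assms by auto
  have "{x::'a. x^n = a} = {x. poly p x = 0}" unfolding p_def by (auto simp: poly_monom)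
  thus ?thesis using card_poly_roots_bound[OF p0] dp by simp
qed

lemma card_pow_self_le: assumes "n \<ge> 2"
  shows "card {x::'a::field. x^n = x} \<le> n"
proof -
  define p where "p = monom (1::'a) n + [:0, -1:]"
  have dp: "degree p = n" unfolding p_def using assms by (subst degree_add_eq_left) (simp_all add: degree_monom_eq)
  have p0: "p \<noteq> 0" using dp assms by auto
  have "{x::'a. x^n = x} = {x. poly p x = 0}" unfolding p_def by (auto simp: poly_monom)
  thus ?thesis using card_poly_roots_bound[OF p0] dp by simp
qed

lemma ffield_pow_card: fixes x :: "'a::{field,finite}"
  shows "x ^ card (UNIV :: 'a set) = x"
proof (cases "x = 0")
  case False
  have "x * (\<Prod>y\<in>UNIV-{0}. x * y) = x * x ^ (card (UNIV :: 'a set) - 1) * \<Prod>(UNIV-{0})"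
    by (simp add: prod.distrib mult_ac)
  also have "x * x ^ (card (UNIV :: 'a set) - 1) = x ^ Suc (card (UNIV :: 'a set) - 1)"
    by (subst power_Suc) auto
  also have "Suc (card (UNIV :: 'a set) - 1) = card (UNIV :: 'a set)"
    using finite_UNIV_card_ge_0[where ?'a = 'a] by simp
  also have "(\<Prod>y\<in>UNIV-{0}. x * y) = (\<Prod>y\<in>UNIV-{0}. y)"
    by (rule prod.reindex_bij_witness[of _ "\<lambda>y. y / x" "\<lambda>y. x * y"]) (use False in auto)
  finally show ?thesis
    by simp
qed (use finite_UNIV_card_ge_0[where ?'a = 'a] in auto)
lemma lin_b: fixes a b k :: "'a::ab_group_add" shows "-(a + b) = k \<Longrightarrow> b = -k - a"
proof -
  assume h: "-(a + b) = k"
  hence "a + b = -k" by (metis minus_minus)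
  thus "b = -k - a" by (simp add: eq_diff_eq add.commute)
qed
lemma lin_c: fixes a b :: "'a::ab_group_add" shows "b + a = 0 \<Longrightarrow> a = - b"
  by (metis add.commute eq_neg_iff_add_eq_0)

lemma sq_b: fixes z c :: "'a::comm_ring_1" shows "z * c = -1 \<Longrightarrow> c = -k - z \<Longrightarrow> z^2 + k*z - 1 = 0"
  by (auto simp: algebra_simps power2_eq_square)

context
  fixes m :: nat
  assumes m1: "m \<ge> 1" and cardU: "card (UNIV :: 'a::{field,finite} set) = (3^m)^2"
begin

lemma char3: "CHAR('a) = 3"
proof -
  have pos: "CHAR('a) > 0" by (rule finite_imp_CHAR_pos) simp
  have pr: "prime CHAR('a)" by (rule prime_CHAR_semidom[OF pos])
  have "CHAR('a) dvd 3^(2*m)" using CHAR_dvd_CARD[where 'a='a] cardU by (simp add: power_mult mult.commute)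
  hence "CHAR('a) dvd 3" using pr prime_dvd_power by blast
  hence le: "CHAR('a) \<le> 3" by (rule dvd_imp_le) simp
  have ge: "CHAR('a) \<ge> 2" using pr by (rule prime_ge_2_nat)
  have "CHAR('a) \<noteq> 2" using \<open>CHAR('a) dvd 3\<close> by (metis even_numeral odd_numeral)
  thus ?thesis using le ge by linarith
qed

lemma three_a: "(3::'a) = 0"
proof -
  have "(of_nat CHAR('a) :: 'a) = 0" by simp
  thus ?thesis unfolding char3 by simp
qed

lemma frob: "((x::'a) + y)^(3^k) = x^(3^k) + y^(3^k)"
proof -
  have pr: "prime CHAR('a)" by (simp add: char3)
  show ?thesis by (rule freshmans_dream'[OF pr]) (simp add: char3)
qed

lemma conj3_q: "conj3 (\<lambda>x::'a. x^(3^m))"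
proof
  fix x y :: 'a
  show "(x + y)^(3^m) = x^(3^m) + y^(3^m)" by (rule frob)
  show "(x * y)^(3^m) = x^(3^m) * y^(3^m)" by (rule power_mult_distrib)
  show "(x^(3^m))^(3^m) = x"
  proof -
    have "(x^(3^m))^(3^m) = x ^ card (UNIV :: 'a set)" by (simp add: cardU power_mult[symmetric] power2_eq_square)
    thus ?thesis by (simp add: ffield_pow_card)
  qed
  show "(1::'a)^(3^m) = 1" by simp
  show "(3::'a) = 0" by (rule three_a)
qed

interpretation C: conj3 "\<lambda>x::'a. x^(3^m)" by (rule conj3_q)

lemma q_ge3: "(3::nat)^m \<ge> 3"
proof -
  have "(3::nat)^m \<ge> 3^1" using m1 by (intro power_increasing) auto
  thus ?thesis by simp
qed

lemma Fq_fin: "finite {x::'a. P x}" by simp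

lemma Fq_le: "card {x::'a. x^(3^m) = x} \<le> 3^m"
  using card_pow_self_le[of "3^m"] q_ge3 by simp

lemma pow_q_sq: "((x::'a)^(3^m))^(3^m) = x" using C.c_c by simp

lemma norm_facts:
  shows "card {x::'a. x^(3^m) = x} = 3^m"
    and "(\<lambda>x::'a. x^(3^m+1)) ` (UNIV - {0}) = {x. x^(3^m) = x} - {0}"
proof -
  define q :: nat where "q = 3^m"
  have q3: "q \<ge> 3" unfolding q_def by (rule q_ge3)
  define Fq where "Fq = {x::'a. x^q = x}"
  define N where "N = (\<lambda>x::'a. x^(q+1))"
  define A where "A = (UNIV - {0::'a})"
  have cA: "card A = q*q - 1" unfolding A_def using cardU q_def
    by (simp add: card_Diff_singleton power2_eq_square)
  have fib: "card {x \<in> A. N x = y} \<le> q + 1" for y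
  proof -
    have "{x \<in> A. N x = y} \<subseteq> {x. x^(q+1) = y}" unfolding N_def by auto
    hence "card {x \<in> A. N x = y} \<le> card {x::'a. x^(q+1) = y}" by (intro card_mono) auto
    also have "\<dots> \<le> q + 1" by (rule card_pow_eq_le) simp
    finally show ?thesis .
  qed
  have g: "card A \<le> (q+1) * card (N ` A)" by (rule card_fibres_le) (use fib in auto)
  have sub: "N ` A \<subseteq> Fq - {0}"
  proof
    fix y assume "y \<in> N ` A"
    then obtain x where x: "x \<noteq> 0" "y = x^(q+1)" unfolding A_def N_def by auto
    have "y^q = (x^q)^q * x^q" unfolding x(2) by (simp add: power_mult[symmetric] power_add mult.commute power_mult_distrib)
    also have "\<dots> = x * x^q" using pow_q_sq unfolding q_def by simp
    also have "\<dots> = y" unfolding x(2) by (simp add: mult.commute)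
    finally show "y \<in> Fq - {0}" unfolding Fq_def using x by simp
  qed
  have F0: "0 \<in> Fq" unfolding Fq_def using q3 by simp
  have cF: "card Fq \<le> q" unfolding Fq_def q_def using Fq_le .
  have cF0: "card (Fq - {0}) = card Fq - 1" using F0 by (simp add: card_Diff_singleton)
  have "card (N ` A) \<le> card (Fq - {0})" by (rule card_mono) (use sub in auto)
  hence "card (N ` A) \<le> q - 1" using cF cF0 by linarith
  moreover have "q*q - 1 = (q+1)*(q-1)" using q3 by (simp add: algebra_simps)
  ultimately have k: "q - 1 \<le> card (N ` A)" using g cA by (metis mult_le_cancel1 add_gr_0 zero_less_one)
  have e1: "card (N ` A) = card (Fq - {0})" using k \<open>card (N ` A) \<le> card (Fq - {0})\<close> cF cF0 by linarith
  have "N ` A = Fq - {0}" by (rule card_subset_eq) (use sub e1 in auto)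
  thus "(\<lambda>x::'a. x^(3^m+1)) ` (UNIV - {0}) = {x. x^(3^m) = x} - {0}"
    unfolding N_def A_def Fq_def q_def .
  have cF1: "card Fq \<ge> 1" using F0 by (auto simp: Suc_le_eq card_gt_0_iff)
  have "card Fq = q" using e1 k cF cF0 cF1 q3 by linarith
  thus "card {x::'a. x^(3^m) = x} = 3^m" unfolding Fq_def q_def .
qed

lemma exists_norm_m1: "\<exists>z0::'a. z0^(3^m+1) = -1"
proof -
  have "odd ((3::nat)^m)" by simp
  hence "(-1::'a)^(3^m) = -1" by simp
  hence "(-1::'a) \<in> {x. x^(3^m) = x} - {0}" by simp
  thus ?thesis using norm_facts(2) by (metis (no_types, lifting) image_iff)
qed

lemma exists_z: assumes m2: "m \<ge> 2"
  shows "\<exists>z::'a. z * z^(3^m) = -1 \<and> z^(3^m) \<noteq> z \<and> (-(z + z^(3^m)))^3 \<noteq> -(z + z^(3^m))"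
proof -
  define q :: nat where "q = 3^m"
  have q9: "q \<ge> 9"
  proof -
    have "(3::nat)^m \<ge> 3^2" using m2 by (intro power_increasing) auto
    thus ?thesis unfolding q_def by simp
  qed
  obtain z0 :: 'a where z0: "z0^(q+1) = -1" using exists_norm_m1 unfolding q_def by blast
  have z00: "z0 \<noteq> 0" using z0 by auto
  define P8 :: "'a poly" where "P8 = [:1,0,1:] * [:-1,0,1:] * [:-1,-1,1:] * [:-1,1,1:]"
  have pP8: "poly P8 x = (1 + x^2)*(x^2 - 1)*(x^2 - x - 1)*(x^2 + x - 1)" for x
    unfolding P8_def by (simp add: algebra_simps power2_eq_square)
  have dP8: "degree P8 = 8" unfolding P8_def by (simp add: degree_mult_eq)
  define Pc where "Pc = pcompose P8 (monom z0 (q-1))"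
  have dPc: "degree Pc = 8 * (q-1)" unfolding Pc_def using z00 by (simp add: degree_pcompose dP8 degree_monom_eq)
  have Pc0: "Pc \<noteq> 0" using dPc q9 by (metis degree_0 mult_is_0 zero_neq_numeral diff_is_0_eq le_trans
        numeral_le_one_iff semiring_norm(70) one_le_numeral not_le)
  have roots: "card {v. poly Pc v = 0} \<le> 8 * (q-1)" using card_poly_roots_bound[OF Pc0] dPc by simp
  have cA: "card (UNIV - {0::'a}) = q*q - 1" using cardU unfolding q_def
    by (simp add: card_Diff_singleton power2_eq_square)
  have "\<exists>v::'a. v \<noteq> 0 \<and> poly Pc v \<noteq> 0"
  proof (rule ccontr)
    assume "\<not> ?thesis"
    hence "UNIV - {0} \<subseteq> {v. poly Pc v = 0}" by auto
    hence "card (UNIV - {0::'a}) \<le> card {v. poly Pc v = 0}" by (intro card_mono) auto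
    hence "q*q - 1 \<le> 8 * (q-1)" using roots cA by linarith
    moreover have "q*q - 1 = (q+1)*(q-1)" using q9 by (simp add: algebra_simps)
    moreover have "8 * (q-1) < (q+1)*(q-1)" using q9 by (intro mult_strict_right_mono) auto
    ultimately show False by linarith
  qed
  then obtain v :: 'a where v0: "v \<noteq> 0" and pv: "poly Pc v \<noteq> 0" by blast
  define z where "z = z0 * v^(q-1)"
  have pz: "poly P8 z \<noteq> 0" using pv unfolding Pc_def z_def by (simp add: poly_pcompose poly_monom)
  have vq: "v^(q*q - 1) = 1"
  proof -
    have "v^(q*q) = v" using pow_q_sq[of v] unfolding q_def by (simp add: power_mult)
    moreover have "v^(q*q) = v^(q*q - 1) * v" using q9 by (metis power_Suc2 Suc_diff_1 nat_0_less_mult_iff zero_less_iff_neq_zero not_numeral_le_zero le_zero_eq)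
    ultimately show ?thesis using v0 by simp
  qed
  have zq: "z^(q+1) = -1"
  proof -
    have "z^(q+1) = z0^(q+1) * (v^(q-1))^(q+1)" unfolding z_def by (rule power_mult_distrib)
    also have "(v^(q-1))^(q+1) = v^((q-1)*(q+1))" by (rule power_mult[symmetric])
    also have "(q-1)*(q+1) = q*q - 1" using q9 by (simp add: algebra_simps)
    finally show ?thesis using z0 vq by simp
  qed
  have zz: "z * z^q = -1" using zq by (simp add: mult.commute)
  have z0': "z \<noteq> 0" using zz by auto
  show ?thesis unfolding q_def[symmetric]
  proof (intro exI conjI)
    show "z * z^q = -1" by (rule zz)
    show "z^q \<noteq> z"
    proof
      assume "z^q = z"
      hence "1 + z^2 = 0" using zz by (simp add: power2_eq_square)
      thus False using pz pP8 by simp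
    qed
    show "(-(z + z^q))^3 \<noteq> -(z + z^q)"
    proof
      define cz where "cz = z^q"
      have zc: "z * cz = -1" using zz unfolding cz_def .
      assume "(-(z + z^q))^3 = -(z + z^q)"
      hence "-(z + cz) = 0 \<or> -(z + cz) = 1 \<or> -(z + cz) = -1" unfolding cz_def[symmetric] by (rule C.cube_self)
      hence "z^2 + 0*z - 1 = 0 \<or> z^2 + 1*z - 1 = 0 \<or> z^2 + (-1)*z - 1 = 0"
        using sq_b[OF zc lin_b] by blast
      hence "z^2 - 1 = 0 \<or> z^2 + z - 1 = 0 \<or> z^2 - z - 1 = 0" by simp
      thus False using pz pP8 by auto
    qed
  qed
qed

definition Tr :: "'a \<Rightarrow> 'a" where "Tr y = (\<Sum>k<m. y^(3^k))"

lemma Tr_add: "Tr (x + y) = Tr x + Tr y"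
  unfolding Tr_def by (simp add: frob sum.distrib)

lemma Tr_neg: "Tr (- x) = - Tr x"
  unfolding Tr_def by (simp add: sum_negf)

lemma Tr_diff: "Tr (x - y) = Tr x - Tr y"
  using Tr_add[of x "-y"] Tr_neg[of y] by simp

lemma Tr_cube: "Tr (x^3) - Tr x = x^(3^m) - x"
proof -
  have "Tr (x^3) - Tr x = (\<Sum>k<m. x^(3^(Suc k)) - x^(3^k))"
    unfolding Tr_def by (simp add: sum_subtractf power_mult[symmetric] mult.commute)
  also have "\<dots> = x^(3^m) - x^(3^0)" by (rule sum_lessThan_telescope)
  finally show ?thesis by simp
qed

lemma Tr_AS: "y^(3^m) = y \<Longrightarrow> Tr (y^3 - y) = 0"
  using Tr_cube[of y] Tr_diff[of "y^3" y] by simp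

lemma Tr_roots: assumes c0: "c0 \<noteq> 0" shows "card {w. Tr (c0 * w) = 0} \<le> 3^(m-1)"
proof -
  define P :: "'a poly" where "P = (\<Sum>k<m. monom (c0^(3^k)) (3^k))"
  have pP: "poly P w = Tr (c0 * w)" for w
    unfolding P_def Tr_def by (simp add: poly_sum poly_monom power_mult_distrib)
  have dP: "degree P \<le> 3^(m-1)" unfolding P_def
  proof (rule degree_sum_le)
    fix k assume "k \<in> {..<m}"
    hence "k \<le> m - 1" by auto
    hence "(3::nat)^k \<le> 3^(m-1)" by (intro power_increasing) auto
    thus "degree (monom (c0^(3^k)) (3^k)) \<le> 3^(m-1)" by (meson degree_monom_le le_trans)
  qed simp
  have "coeff P (3^(m-1)) = (\<Sum>k<m. if k = m - 1 then c0^(3^k) else 0)"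
    unfolding P_def coeff_sum coeff_monom by (intro sum.cong) auto
  also have "\<dots> = c0^(3^(m-1))" using m1 by simp
  finally have "coeff P (3^(m-1)) \<noteq> 0" using c0 by simp
  hence P0: "P \<noteq> 0" by auto
  have "{w. Tr (c0 * w) = 0} = {w. poly P w = 0}" using pP by simp
  thus ?thesis using card_poly_roots_bound[OF P0] dP by simp
qed

lemma Fq_closed:
  assumes "x^(3^m) = x" "y^(3^m) = (y::'a)"
  shows "(x + y)^(3^m) = x + y" "(x - y)^(3^m) = x - y" "(x * y)^(3^m) = x * y"
    "(x / y)^(3^m) = x / y" "(x^3)^(3^m) = x^3" "(-x)^(3^m) = -x"
  using assms C.c_add[of x y] C.c_diff[of x y] C.c_mult[of x y] C.c_divide[of x y] C.c_power[of x 3]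
    C.c_minus[of x] by simp_all

lemma cube_surj: assumes "th^(3^m) = (th::'a)" shows "\<exists>t'. t'^(3^m) = t' \<and> t'^3 = th"
proof -
  define Fq where "Fq = {x::'a. x^(3^m) = x}"
  have inj: "inj_on (\<lambda>x. x^3) Fq"
  proof (rule inj_onI)
    fix x y :: 'a assume "x^3 = y^3"
    hence "(x - y)^3 = 0" using C.cube_diff[of x y] by simp
    thus "x = y" by simp
  qed
  have sub: "(\<lambda>x. x^3) ` Fq \<subseteq> Fq" unfolding Fq_def using Fq_closed(5) by auto
  have "(\<lambda>x. x^3) ` Fq = Fq"
    by (rule card_subset_eq) (use sub card_image[OF inj] in auto)
  moreover have "th \<in> Fq" unfolding Fq_def using assms by simp
  ultimately obtain t' where "t' \<in> Fq" "t'^3 = th" by (metis imageE)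
  thus ?thesis unfolding Fq_def by auto
qed

lemma exists_w2: assumes m2: "m \<ge> 2" and th1: "th^(3^m) = (th::'a)" and th2: "th^3 \<noteq> th"
  shows "\<exists>w. w^(3^m) = w \<and> w^3 \<noteq> w \<and> (\<forall>y. y^(3^m) = y \<longrightarrow> y^3 - y + (w^3 - w)/th \<noteq> 0)"
proof -
  define Fq where "Fq = {x::'a. x^(3^m) = x}"
  obtain t' where t1: "t'^(3^m) = t'" and t2: "t'^3 = th" using cube_surj[OF th1] by blast
  have th0: "th \<noteq> 0" using th2 by auto
  have t0: "t' \<noteq> 0" using t2 th0 by auto
  define c0 where "c0 = 1/t' - 1/th"
  have c00: "c0 \<noteq> 0"
  proof
    assume "c0 = 0" hence "t' = th" unfolding c0_def using t0 th0 by (simp add: field_simps)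
    thus False using t2 th2 by simp
  qed
  have key: "Tr ((w^3 - w)/th) = Tr (c0 * w)" if w: "w^(3^m) = w" for w
  proof -
    have wt: "(w/t')^(3^m) = w/t'" using Fq_closed(4)[OF w t1] .
    have "(w^3 - w)/th = (w/t')^3 - w/th" using t0 unfolding t2[symmetric] by (simp add: field_simps power3_eq_cube)
    hence "Tr ((w^3 - w)/th) = Tr ((w/t')^3) - Tr (w/th)" by (simp add: Tr_diff)
    also have "Tr ((w/t')^3) = Tr (w/t')" using Tr_cube[of "w/t'"] wt by simp
    also have "Tr (w/t') - Tr (w/th) = Tr (w/t' - w/th)" by (simp add: Tr_diff)
    also have "w/t' - w/th = c0 * w" unfolding c0_def by (simp add: field_simps)
    finally show ?thesis .
  qed
  define Bad where "Bad = {w. Tr (c0 * w) = 0} \<union> {0, 1, -1::'a}"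
  have cB: "card Bad \<le> 3^(m-1) + 3"
  proof -
    have "card Bad \<le> card {w. Tr (c0 * w) = 0} + card {0, 1, -1::'a}"
      unfolding Bad_def by (rule card_Un_le)
    also have "card {0, 1, -1::'a} \<le> 3" by (rule card_insert_le_m1; simp add: card_insert_le_m1)
    finally show ?thesis using Tr_roots[OF c00] by linarith
  qed
  have cF: "card Fq = 3^m" unfolding Fq_def by (rule norm_facts(1))
  have "(3::nat)^(m-1) + 3 < 3^m"
  proof -
    obtain k where k: "m = Suc k" using m1 by (cases m) auto
    have k1: "k \<ge> 1" using m2 k by simp
    have "(3::nat)^k \<ge> 3^1" using k1 by (intro power_increasing) auto
    thus ?thesis unfolding k by simp
  qed
  hence "\<not> Fq \<subseteq> Bad" using cB cF card_mono[of Bad Fq] by (auto simp: Bad_def)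
  then obtain w where wF: "w \<in> Fq" and wB: "w \<notin> Bad" by blast
  have w1: "w^(3^m) = w" using wF unfolding Fq_def by simp
  have w2: "w^3 \<noteq> w"
  proof
    assume "w^3 = w" hence "w = 0 \<or> w = 1 \<or> w = -1" by (rule C.cube_self)
    thus False using wB unfolding Bad_def by auto
  qed
  have w3: "Tr (c0 * w) \<noteq> 0" using wB unfolding Bad_def by auto
  show ?thesis
  proof (intro exI conjI allI impI)
    show "w^(3^m) = w" by (rule w1)
    show "w^3 \<noteq> w" by (rule w2)
    fix y :: 'a assume y: "y^(3^m) = y"
    show "y^3 - y + (w^3 - w)/th \<noteq> 0"
    proof
      assume "y^3 - y + (w^3 - w)/th = 0"
      hence "(w^3 - w)/th = - (y^3 - y)" by (rule lin_c)
      hence "Tr ((w^3 - w)/th) = Tr (- (y^3 - y))" by simp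
      also have "\<dots> = - Tr (y^3 - y)" by (rule Tr_neg)
      also have "\<dots> = 0" using Tr_AS[OF y] by simp
      finally have "Tr ((w^3 - w)/th) = 0" .
      thus False using key[OF w1] w3 by simp
    qed
  qed
qed

lemma exists_w5: assumes q27: "(3::nat)^m \<ge> 27" and th1: "th^(3^m) = (th::'a)" and th0: "th \<noteq> 0"
  shows "\<exists>w y. w^(3^m) = w \<and> w^3 \<noteq> w \<and> y^(3^m) = y \<and> y^3 - y + (w^3 - w)/th = 0"
proof -
  define q :: nat where "q = 3^m"
  define Fq where "Fq = {x::'a. x^(3^m) = x}"
  define A where "A = Fq \<times> Fq"
  define L where "L = (\<lambda>p::'a\<times>'a. (fst p^3 - fst p) + th * (snd p^3 - snd p))"
  define ker where "ker = {p \<in> A. L p = 0}"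
  have cF: "card Fq = q" unfolding Fq_def q_def by (rule norm_facts(1))
  have finF: "finite Fq" by simp
  have cA: "card A = q * q" unfolding A_def using cF by (simp add: card_cartesian_product)
  have finA: "finite A" unfolding A_def using finF by simp
  have Ldiff: "L (a - a0, b - b0) = L (a, b) - L (a0, b0)" for a a0 b b0
    unfolding L_def by (simp only: fst_conv snd_conv C.cube_diff) (simp add: algebra_simps)
  have img: "L ` A \<subseteq> Fq"
  proof
    fix v assume "v \<in> L ` A"
    then obtain a b where ab: "a \<in> Fq" "b \<in> Fq" "v = L (a, b)" unfolding A_def by auto
    have a: "a^(3^m) = a" and b: "b^(3^m) = b" using ab unfolding Fq_def by auto
    have ab3: "(a^3 - a)^(3^m) = a^3 - a" by (rule Fq_closed(2)[OF Fq_closed(5)[OF a a] a])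
    have bb3: "(b^3 - b)^(3^m) = b^3 - b" by (rule Fq_closed(2)[OF Fq_closed(5)[OF b b] b])
    have tb: "(th * (b^3 - b))^(3^m) = th * (b^3 - b)" by (rule Fq_closed(3)[OF th1 bb3])
    have "((a^3 - a) + th * (b^3 - b))^(3^m) = (a^3 - a) + th * (b^3 - b)" by (rule Fq_closed(1)[OF ab3 tb])
    thus "v \<in> Fq" unfolding ab(3) L_def Fq_def by simp
  qed
  have fib: "card {p \<in> A. L p = v} \<le> card ker" if "v \<in> L ` A" for v
  proof -
    obtain p0 where p0: "p0 \<in> A" "L p0 = v" using \<open>v \<in> L ` A\<close> by auto
    have "{p \<in> A. L p = v} \<subseteq> (\<lambda>k. (fst k + fst p0, snd k + snd p0)) ` ker"
    proof
      fix p assume p: "p \<in> {p \<in> A. L p = v}"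
      obtain a b where pab: "p = (a, b)" by (cases p)
      obtain a0 b0 where p0ab: "p0 = (a0, b0)" by (cases p0)
      have inF: "a \<in> Fq" "b \<in> Fq" "a0 \<in> Fq" "b0 \<in> Fq" using p p0 unfolding pab p0ab A_def by auto
      have "(a - a0, b - b0) \<in> A" using inF Fq_closed(2) unfolding A_def Fq_def by auto
      moreover have "L (a - a0, b - b0) = 0" using Ldiff p p0 unfolding pab p0ab by simp
      ultimately have "(a - a0, b - b0) \<in> ker" unfolding ker_def by simp
      moreover have "p = (fst (a - a0, b - b0) + fst p0, snd (a - a0, b - b0) + snd p0)"
        unfolding pab p0ab by simp
      ultimately show "p \<in> (\<lambda>k. (fst k + fst p0, snd k + snd p0)) ` ker" by blast
    qed
    hence "card {p \<in> A. L p = v} \<le> card ((\<lambda>k. (fst k + fst p0, snd k + snd p0)) ` ker)"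
      by (intro card_mono) (auto simp: ker_def finA)
    also have "\<dots> \<le> card ker" by (rule card_image_le) (simp add: ker_def finA)
    finally show ?thesis .
  qed
  have "card A \<le> card ker * card (L ` A)" by (rule card_fibres_le[OF finA fib])
  also have "\<dots> \<le> card ker * q" using card_mono[OF finF img] cF by simp
  finally have "q * q \<le> card ker * q" using cA by simp
  moreover have q0: "q > 0" unfolding q_def by simp
  ultimately have ck: "q \<le> card ker" using mult_le_cancel2[of q q "card ker"] by simp
  define Bad where "Bad = {p \<in> ker. fst p^3 = fst p}"
  have "Bad \<subseteq> {0, 1, -1::'a} \<times> {0, 1, -1::'a}"
  proof
    fix p assume p: "p \<in> Bad"
    obtain a b where pab: "p = (a, b)" by (cases p)
    have a3: "a^3 = a" and Lp: "L p = 0" using p unfolding Bad_def ker_def pab by auto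
    have "th * (b^3 - b) = 0" using Lp a3 unfolding L_def pab by simp
    hence "b^3 = b" using th0 by simp
    thus "p \<in> {0, 1, -1} \<times> {0, 1, -1}" using C.cube_self[OF a3] C.cube_self[of b] unfolding pab by auto
  qed
  hence "card Bad \<le> card ({0, 1, -1::'a} \<times> {0, 1, -1::'a})" by (intro card_mono) auto
  also have "\<dots> \<le> 9"
  proof -
    have h: "card {0, 1, -1::'a} \<le> 3" by (simp add: card_insert_le_m1)
    have "card ({0, 1, -1::'a} \<times> {0, 1, -1::'a}) = card {0, 1, -1::'a} * card {0, 1, -1::'a}"
      by (rule card_cartesian_product)
    also have "\<dots> \<le> 3 * 3" by (rule mult_le_mono[OF h h])
    finally show ?thesis by simp
  qed
  finally have cBad: "card Bad \<le> 9" .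
  have "\<not> ker \<subseteq> Bad"
  proof
    assume "ker \<subseteq> Bad"
    hence "card ker \<le> card Bad" by (intro card_mono) (auto simp: Bad_def ker_def finA)
    thus False using ck cBad q27 unfolding q_def by linarith
  qed
  then obtain p where pk: "p \<in> ker" and pB: "p \<notin> Bad" by blast
  obtain w y where pwy: "p = (w, y)" by (cases p)
  have wy: "w \<in> Fq" "y \<in> Fq" "L (w, y) = 0" using pk unfolding pwy ker_def A_def by auto
  have w3: "w^3 \<noteq> w" using pB pk unfolding pwy Bad_def by auto
  have "(w^3 - w) + th * (y^3 - y) = 0" using wy(3) unfolding L_def by simp
  hence "y^3 - y + (w^3 - w)/th = 0" using th0 by (simp add: field_simps)
  thus ?thesis using wy w3 unfolding Fq_def by blast
qed

lemma beta_eq: assumes cb: "b^(3^m) \<noteq> b"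
  shows "beta (\<lambda>x::'a. x^(3^m+2)) 1 b = card {u. C.F u = - b}"
proof -
  have "{(x, y). (x::'a)^(3^m+2) - y^(3^m+2) = b \<and> (x+1)^(3^m+2) - (y+1)^(3^m+2) = b}
      = {(x, y). x^(3^m) * x^2 - y^(3^m) * y^2 = b \<and> (x+1)^(3^m) * (x+1)^2 - (y+1)^(3^m) * (y+1)^2 = b}"
    by (simp only: power_add)
  thus ?thesis unfolding beta_def using C.partB_card[OF cb] by simp
qed

lemma fam_q: assumes "z * z^(3^m) = -1" "z^(3^m) \<noteq> z" "w^(3^m) = w" "w^3 \<noteq> (w::'a)"
  shows "fam (\<lambda>x::'a. x^(3^m)) z w"
  by (intro fam.intro fam_axioms.intro conj3_q) (use assms in simp_all)

lemma witness:
  assumes fz: "fam (\<lambda>x::'a. x^(3^m)) z w"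
  shows "fam.tv (\<lambda>x::'a. x^(3^m)) z w \<noteq> 0"
    and "beta (\<lambda>x::'a. x^(3^m+2)) 1 (- fam.tv (\<lambda>x::'a. x^(3^m)) z w) = card (fam.Rt (\<lambda>x::'a. x^(3^m)) z w)"
proof -
  interpret Fm: fam "\<lambda>x::'a. x^(3^m)" z w by (rule fz)
  have ct: "Fm.tv^(3^m) \<noteq> Fm.tv" using Fm.ct_ne by simp
  show "Fm.tv \<noteq> 0" using ct by auto
  have cb: "(- Fm.tv)^(3^m) \<noteq> - Fm.tv" using ct C.c_minus[of Fm.tv] by simp
  have "beta (\<lambda>x::'a. x^(3^m+2)) 1 (- Fm.tv) = card {u. C.F u = Fm.tv}"
    using beta_eq[OF cb] by simp
  also have "\<dots> = card {n. n^(3^m) = n \<and> n \<noteq> 0 \<and> n \<noteq> -1 \<and> Qp (Fm.tv + Fm.tv^(3^m)) (Fm.tv - Fm.tv^(3^m)) n = 0}"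
    using C.partC_card[OF ct] by simp
  also have "\<dots> = card Fm.Rt" unfolding Fm.Rt_def using Fm.tA Fm.tB by simp
  finally show "beta (\<lambda>x::'a. x^(3^m+2)) 1 (- Fm.tv) = card Fm.Rt" .
qed

lemma nu_pos: assumes "b \<noteq> 0" "beta f 1 b = i" shows "nu (f::'a \<Rightarrow> 'a) i > 0"
proof -
  have "b \<in> {b. b \<noteq> 0 \<and> beta f 1 b = i}" using assms by simp
  hence "{b. b \<noteq> 0 \<and> beta f 1 b = i} \<noteq> {}" by blast
  thus ?thesis unfolding nu_def by (simp add: card_gt_0_iff)
qed

lemma main2: assumes "(3::nat)^m \<ge> 9" shows "nu (\<lambda>x::'a. x^(3^m+2)) 2 > 0"
proof -
  have m2: "m \<ge> 2"
  proof (rule ccontr)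
    assume "\<not> m \<ge> 2" hence "m = 1" using m1 by simp
    thus False using assms by simp
  qed
  obtain z :: 'a where z1: "z * z^(3^m) = -1" and z2: "z^(3^m) \<noteq> z"
    and z3: "(-(z + z^(3^m)))^3 \<noteq> -(z + z^(3^m))" using exists_z[OF m2] by blast
  define th where "th = -(z + z^(3^m))"
  have th1: "th^(3^m) = th" unfolding th_def
    using C.c_minus[of "z + z^(3^m)"] C.c_add[of z "z^(3^m)"] C.c_c[of z] by (simp add: add.commute)
  obtain w :: 'a where w1: "w^(3^m) = w" and w2: "w^3 \<noteq> w"
    and w3: "\<forall>y. y^(3^m) = y \<longrightarrow> y^3 - y + (w^3 - w)/th \<noteq> 0"
    using exists_w2[OF m2 th1] z3 unfolding th_def by blast
  have fz: "fam (\<lambda>x::'a. x^(3^m)) z w" by (rule fam_q[OF z1 z2 w1 w2])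
  interpret Fm: fam "\<lambda>x::'a. x^(3^m)" z w by (rule fz)
  have "card Fm.Rt = 2"
  proof (rule Fm.beta2)
    show "\<forall>y. y^(3^m) = y \<longrightarrow> y^3 - y + Fm.phv/Fm.thv \<noteq> 0"
      using w3 unfolding Fm.phv_def Fm.thv_def th_def by simp
  qed
  thus ?thesis using witness[OF fz] nu_pos by (metis neg_equal_0_iff_equal)
qed

lemma main5: assumes q27: "(3::nat)^m \<ge> 27" shows "nu (\<lambda>x::'a. x^(3^m+2)) 5 > 0"
proof -
  have m2: "m \<ge> 2"
  proof (rule ccontr)
    assume "\<not> m \<ge> 2" hence "m = 1" using m1 by simp
    thus False using q27 by simp
  qed
  obtain z :: 'a where z1: "z * z^(3^m) = -1" and z2: "z^(3^m) \<noteq> z"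
    using exists_z[OF m2] by blast
  define th where "th = -(z + z^(3^m))"
  have th1: "th^(3^m) = th" unfolding th_def
    using C.c_minus[of "z + z^(3^m)"] C.c_add[of z "z^(3^m)"] C.c_c[of z] by (simp add: add.commute)
  have th0: "th \<noteq> 0"
  proof
    assume "th = 0"
    hence "-(z + z^(3^m)) = 0" unfolding th_def .
    hence "z + z^(3^m) = 0" by (simp only: neg_equal_0_iff_equal)
    hence zq: "z^(3^m) = - z" by (rule lin_c)
    hence "z * z = 1" using z1 by simp
    hence "(z - 1) * (z + 1) = 0" by (simp add: algebra_simps)
    hence "z = 1 \<or> z = -1" by (auto simp: eq_neg_iff_add_eq_0)
    moreover have "odd ((3::nat)^m)" by simp
    ultimately have "z^(3^m) = z" by auto
    thus False using z2 by simp
  qed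
  obtain w y0 :: 'a where w1: "w^(3^m) = w" and w2: "w^3 \<noteq> w" and y1: "y0^(3^m) = y0"
    and y2: "y0^3 - y0 + (w^3 - w)/th = 0" using exists_w5[OF q27 th1 th0] by blast
  have fz: "fam (\<lambda>x::'a. x^(3^m)) z w" by (rule fam_q[OF z1 z2 w1 w2])
  interpret Fm: fam "\<lambda>x::'a. x^(3^m)" z w by (rule fz)
  have "card Fm.Rt = 5"
  proof (rule Fm.beta5)
    show "y0^(3^m) = y0" by (rule y1)
    show "y0^3 - y0 + Fm.phv/Fm.thv = 0" using y2 unfolding Fm.phv_def Fm.thv_def th_def by simp
  qed
  thus ?thesis using witness[OF fz] nu_pos by (metis neg_equal_0_iff_equal)
qed

end

theorem proposition9:
  fixes m :: nat
    and f :: "'a::{field,finite} \<Rightarrow> 'a"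
  assumes "m \<ge> 1"
    and "card (UNIV :: 'a set) = (3 ^ m) ^ 2"
    and "f = (\<lambda>x. x ^ (3 ^ m + 2))"
  shows "(3 ^ m \<ge> (9::nat) \<longrightarrow> nu f 2 > 0)
       \<and> (3 ^ m \<ge> (27::nat) \<longrightarrow> nu f 5 > 0)"
  using main2[OF assms(1,2)] main5[OF assms(1,2)] assms(3) by simp


end
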